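(* Let $Q$ be a quiver without oriented cycles and $v_0\in Q_0$ a vertex whose only incident arrows are arrows $a_1,\dots,a_l$ with $ta_i=v_i$, $ha_i=v_0$, and a single arrow $b$ with $tb=v_0$, $hb=w$. Let $\beta$ be a dimension vector and $\sigma\in\mathbb{Z}^{Q_0}$ a weight with $\beta(v_0)\ge\beta(w)$ and $\sigma(v_0)=0$. Let $\overline{Q}$ be the quiver with $\overline{Q}_0=Q_0\setminus\{v_0\}$ and $\overline{Q}_1=(Q_1\setminus\{b,a_1,\dots,a_l\})\cup\{ba_1,\dots,ba_l\}$, where $ba_i$ is a new arrow from $v_i$ to $w$. Let $\overline\beta,\overline\sigma$ be the restrictions of $\beta,\sigma$ to $\overline{Q}_0$. Then $\operatorname{SI}(Q,\beta)_\sigma\cong\operatorname{SI}(\overline{Q},\overline\beta)_{\overline\sigma}$. The same holds with the orientations of all the arrows $a_i$ and $b$ reversed.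
   Context: Work over an algebraically closed field $k$ of characteristic zero. $\operatorname{SI}(Q,\beta)_\sigma$ is the space of polynomial functions $f$ on $\operatorname{Rep}(Q,\beta)=\bigoplus_a\operatorname{Hom}_k(k^{\beta(ta)},k^{\beta(ha)})$ satisfying $g\cdot f=\sigma(g)f$ for all $g\in\operatorname{GL}(\beta)=\prod_x\operatorname{GL}(\beta(x))$, where $\operatorname{GL}(\beta)$ acts by $(g\cdot W)(a)=g(ha)W(a)g(ta)^{-1}$ and $\sigma(g)=\prod_x\det(g(x))^{\sigma(x)}$. *)

theory Defs
  imports "HOL-Computational_Algebra.Polynomial" "Jordan_Normal_Form.Determinant"
begin

definition quiver :: "'v set \<Rightarrow> 'a set \<Rightarrow> ('a \<Rightarrow> 'v) \<Rightarrow> ('a \<Rightarrow> 'v) \<Rightarrow> bool" where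
  "quiver V A tA hA \<longleftrightarrow> finite V \<and> finite A \<and> (\<forall>a\<in>A. tA a \<in> V \<and> hA a \<in> V)"

definition no_oriented_cycles :: "'a set \<Rightarrow> ('a \<Rightarrow> 'v) \<Rightarrow> ('a \<Rightarrow> 'v) \<Rightarrow> bool" where
  "no_oriented_cycles A tA hA \<longleftrightarrow> (\<forall>x. (x, x) \<notin> {(tA a, hA a) | a. a \<in> A}\<^sup>+)"

definition alg_closed_char0 :: "'k::field_char_0 itself \<Rightarrow> bool" where
  "alg_closed_char0 _ \<longleftrightarrow> (\<forall>p :: 'k poly. degree p > 0 \<longrightarrow> (\<exists>x. poly p x = 0))"

definition Rep :: "'a set \<Rightarrow> ('a \<Rightarrow> 'v) \<Rightarrow> ('a \<Rightarrow> 'v) \<Rightarrow> ('v \<Rightarrow> nat) \<Rightarrow> ('a \<Rightarrow> 'k::field mat) set" where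
  "Rep A tA hA \<beta> = {W. (\<forall>a\<in>A. W a \<in> carrier_mat (\<beta> (hA a)) (\<beta> (tA a))) \<and> (\<forall>a. a \<notin> A \<longrightarrow> W a = 0\<^sub>m 0 0)}"

definition GL :: "'v set \<Rightarrow> ('v \<Rightarrow> nat) \<Rightarrow> ('v \<Rightarrow> 'k::field mat) set" where
  "GL V \<beta> = {g. (\<forall>x\<in>V. g x \<in> carrier_mat (\<beta> x) (\<beta> x) \<and> det (g x) \<noteq> 0) \<and> (\<forall>x. x \<notin> V \<longrightarrow> g x = 1\<^sub>m 0)}"

definition mat_inv :: "'k::field mat \<Rightarrow> 'k mat" where
  "mat_inv M = (SOME N. N \<in> carrier_mat (dim_row M) (dim_row M) \<and> inverts_mat M N \<and> inverts_mat N M)"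

definition gl_act :: "'a set \<Rightarrow> ('a \<Rightarrow> 'v) \<Rightarrow> ('a \<Rightarrow> 'v) \<Rightarrow> ('v \<Rightarrow> 'k::field mat) \<Rightarrow> ('a \<Rightarrow> 'k mat) \<Rightarrow> ('a \<Rightarrow> 'k mat)" where
  "gl_act A tA hA g W = (\<lambda>a. if a \<in> A then g (hA a) * W a * mat_inv (g (tA a)) else W a)"

definition weight_char :: "'v set \<Rightarrow> ('v \<Rightarrow> int) \<Rightarrow> ('v \<Rightarrow> 'k::field mat) \<Rightarrow> 'k" where
  "weight_char V \<sigma> g = (\<Prod>x\<in>V. det (g x) powi \<sigma> x)"

inductive_set poly_funs :: "('x \<Rightarrow> 'k::comm_ring_1) set \<Rightarrow> ('x \<Rightarrow> 'k) set" for C where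
  pf_const: "(\<lambda>_. c) \<in> poly_funs C"
| pf_coord: "f \<in> C \<Longrightarrow> f \<in> poly_funs C"
| pf_add: "f \<in> poly_funs C \<Longrightarrow> g \<in> poly_funs C \<Longrightarrow> (\<lambda>x. f x + g x) \<in> poly_funs C"
| pf_mult: "f \<in> poly_funs C \<Longrightarrow> g \<in> poly_funs C \<Longrightarrow> (\<lambda>x. f x * g x) \<in> poly_funs C"

definition rep_coords :: "'a set \<Rightarrow> ('a \<Rightarrow> 'v) \<Rightarrow> ('a \<Rightarrow> 'v) \<Rightarrow> ('v \<Rightarrow> nat) \<Rightarrow> (('a \<Rightarrow> 'k::field mat) \<Rightarrow> 'k) set" where
  "rep_coords A tA hA \<beta> = {(\<lambda>W. W a $$ (i, j)) | a i j. a \<in> A \<and> i < \<beta> (hA a) \<and> j < \<beta> (tA a)}"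

(* SI(Q,beta)_sigma: polynomial functions on Rep(Q,beta) (as functions on Rep; set to 0 off Rep)
   with (g.f) = sigma(g) f, where (g.f)(W) = f(g^{-1}.W), i.e. f(g.W) = sigma(g)^{-1} f(W). *)
definition SI :: "'v set \<Rightarrow> 'a set \<Rightarrow> ('a \<Rightarrow> 'v) \<Rightarrow> ('a \<Rightarrow> 'v) \<Rightarrow> ('v \<Rightarrow> nat) \<Rightarrow> ('v \<Rightarrow> int)
    \<Rightarrow> (('a \<Rightarrow> 'k::field mat) \<Rightarrow> 'k) set" where
  "SI V A tA hA \<beta> \<sigma> = {f.
      (\<exists>p \<in> poly_funs (rep_coords A tA hA \<beta>). \<forall>W \<in> Rep A tA hA \<beta>. f W = p W)
    \<and> (\<forall>W. W \<notin> Rep A tA hA \<beta> \<longrightarrow> f W = 0)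
    \<and> (\<forall>g \<in> GL V \<beta>. \<forall>W \<in> Rep A tA hA \<beta>.
          f (gl_act A tA hA g W) = inverse (weight_char V \<sigma> g) * f W)}"

definition lin_iso :: "('x \<Rightarrow> 'k::field) set \<Rightarrow> ('y \<Rightarrow> 'k) set \<Rightarrow> bool" where
  "lin_iso S T \<longleftrightarrow> (\<exists>\<phi>. bij_betw \<phi> S T \<and>
      (\<forall>f\<in>S. \<forall>g\<in>S. \<forall>c. \<phi> (\<lambda>x. c * f x + g x) = (\<lambda>y. c * \<phi> f y + \<phi> g y)))"

end

theory Submission
  imports Defs "Jordan_Normal_Form.Char_Poly"
begin


lemma mat_inv_props:
  fixes M :: "'k::field mat"
  assumes M: "M \<in> carrier_mat n n" and d: "det M \<noteq> 0"
  shows "mat_inv M \<in> carrier_mat n n \<and> M * mat_inv M = 1\<^sub>m n \<and> mat_inv M * M = 1\<^sub>m n"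
proof -
  from det_non_zero_imp_unit[OF M d, of "()"]
  obtain N where N: "N \<in> carrier_mat n n" "M * N = 1\<^sub>m n" "N * M = 1\<^sub>m n"
    unfolding Units_def ring_mat_def by auto
  have ex: "\<exists>N. N \<in> carrier_mat (dim_row M) (dim_row M) \<and> inverts_mat M N \<and> inverts_mat N M"
    using N M unfolding inverts_mat_def by (intro exI[of _ N]) auto
  from someI_ex[OF ex] M show ?thesis unfolding mat_inv_def inverts_mat_def by auto
qed

lemma mat_inv_unique:
  fixes M :: "'k::field mat"
  assumes M: "M \<in> carrier_mat n n" and N: "N \<in> carrier_mat n n" and MN: "M * N = 1\<^sub>m n"
   and NM: "N * M = 1\<^sub>m n"
  shows "mat_inv M = N"
proof -
  have "det M * det N = 1" using det_mult[OF M N] MN by simp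
  hence d: "det M \<noteq> 0" by auto
  from mat_inv_props[OF M d] have I: "mat_inv M \<in> carrier_mat n n" "M * mat_inv M = 1\<^sub>m n" by auto
  have "mat_inv M = (N * M) * mat_inv M" using I NM by simp
  also have "\<dots> = N * (M * mat_inv M)" using I M N by (simp add: assoc_mult_mat)
  also have "\<dots> = N" using I N by simp
  finally show ?thesis .
qed

lemma mat_inv_one[simp]: "mat_inv (1\<^sub>m n :: 'k::field mat) = 1\<^sub>m n"
  by (rule mat_inv_unique[of _ n]) auto

lemma det_shift_poly:
  fixes K :: "'k::field mat"
  assumes K: "K \<in> carrier_mat n n"
  shows "det (s \<cdot>\<^sub>m 1\<^sub>m n + K) = poly (char_poly (-K)) s"
proof -
  have mK: "-K \<in> carrier_mat n n" using K by auto
  have "- char_matrix (-K) s = s \<cdot>\<^sub>m 1\<^sub>m n + K"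
    unfolding char_matrix_def using K by (intro eq_matI) auto
  thus ?thesis using char_poly_matrix[OF mK, of s] by simp
qed

lemma det_shift_cofinite:
  fixes K :: "'k::field mat"
  assumes K: "K \<in> carrier_mat n n"
  shows "finite {s. det (s \<cdot>\<^sub>m 1\<^sub>m n + K) = 0}"
proof -
  have mK: "-K \<in> carrier_mat n n" using K by auto
  have "char_poly (-K) \<noteq> 0" using degree_monic_char_poly[OF mK] by auto
  from poly_roots_finite[OF this] show ?thesis using det_shift_poly[OF K] by simp
qed

lemma poly_eq_cofinite:
  fixes P Q :: "'k::field_char_0 poly"
  assumes F: "finite F" and eq: "\<And>s. s \<notin> F \<Longrightarrow> poly P s = poly Q s"
  shows "P = Q"
proof (rule ccontr)
  assume "P \<noteq> Q" hence "P - Q \<noteq> 0" by auto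
  from poly_roots_finite[OF this] have "finite {s. poly (P - Q) s = 0}" .
  moreover have "UNIV - F \<subseteq> {s. poly (P - Q) s = 0}" using eq by auto
  ultimately have "finite (UNIV - F :: 'k set)" by (rule finite_subset[rotated])
  hence "finite (UNIV :: 'k set)" using F by (metis Diff_cancel Diff_eq_empty_iff finite_Diff2 finite_UnI sup_bot.right_neutral Un_Diff_cancel2)
  thus False using infinite_UNIV_char_0 by auto
qed

lemma poly_funs_curve:
  fixes X :: "'k::comm_ring_1 \<Rightarrow> 'x"
  assumes p: "p \<in> poly_funs C"
    and c: "\<And>c. c \<in> C \<Longrightarrow> \<exists>P. \<forall>s. c (X s) = poly P s"
  shows "\<exists>P. \<forall>s. p (X s) = poly P s"
  using p
proof induction
  case (pf_const c) then show ?case by (intro exI[of _ "[:c:]"]) auto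
next
  case (pf_coord f) then show ?case using c by auto
next
  case (pf_add f g)
  then obtain P Q where "\<forall>s. f (X s) = poly P s" "\<forall>s. g (X s) = poly Q s" by auto
  then show ?case by (intro exI[of _ "P + Q"]) auto
next
  case (pf_mult f g)
  then obtain P Q where "\<forall>s. f (X s) = poly P s" "\<forall>s. g (X s) = poly Q s" by auto
  then show ?case by (intro exI[of _ "P * Q"]) auto
qed

lemma poly_funs_subst:
  assumes p: "p \<in> poly_funs C"
    and c: "\<And>c. c \<in> C \<Longrightarrow> \<exists>q \<in> poly_funs C'. \<forall>W\<in>R. c (T W) = q W"
  shows "\<exists>q \<in> poly_funs C'. \<forall>W\<in>R. p (T W) = q W"
  using p
proof induction
  case (pf_const c) then show ?case by (intro bexI[of _ "\<lambda>_. c"]) (auto intro: poly_funs.intros)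
next
  case (pf_coord f) then show ?case using c by auto
next
  case (pf_add f g)
  then obtain q1 q2 where "q1 \<in> poly_funs C'" "q2 \<in> poly_funs C'" "\<forall>W\<in>R. f (T W) = q1 W" "\<forall>W\<in>R. g (T W) = q2 W" by auto
  then show ?case by (intro bexI[of _ "\<lambda>x. q1 x + q2 x"]) (auto intro: poly_funs.intros)
next
  case (pf_mult f g)
  then obtain q1 q2 where "q1 \<in> poly_funs C'" "q2 \<in> poly_funs C'" "\<forall>W\<in>R. f (T W) = q1 W" "\<forall>W\<in>R. g (T W) = q2 W" by auto
  then show ?case by (intro bexI[of _ "\<lambda>x. q1 x * q2 x"]) (auto intro: poly_funs.intros)
qed

lemma poly_funs_sum:
  assumes "finite I" "\<And>i. i \<in> I \<Longrightarrow> f i \<in> poly_funs C"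
  shows "(\<lambda>x. \<Sum>i\<in>I. f i x) \<in> poly_funs C"
  using assms
proof (induction I rule: finite_induct)
  case empty then show ?case using poly_funs.pf_const[of 0] by simp
next
  case (insert i I)
  have "(\<lambda>x. f i x + (\<Sum>i\<in>I. f i x)) \<in> poly_funs C"
    using insert by (intro poly_funs.pf_add) auto
  thus ?case using insert by simp
qed



definition E0 :: "nat \<Rightarrow> nat \<Rightarrow> 'k::field mat" where
  "E0 m n = mat m n (\<lambda>(i,j). if i = j then 1 else 0)"

definition Dg :: "nat \<Rightarrow> nat \<Rightarrow> 'k \<Rightarrow> 'k::field mat" where
  "Dg m n t = mat n n (\<lambda>(i,j). if i = j then (if i < m then 1 else t) else 0)"

lemma sum_delta_l: "(\<Sum>k\<in>{0..<(n::nat)}. (if i = k then (c::'k::field) else 0) * f k) = (if i < n then c * f i else 0)"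
proof -
  have "(\<Sum>k\<in>{0..<(n::nat)}. (if i = k then c else 0) * f k) = (\<Sum>k\<in>{0..<(n::nat)}. if k = i then c * f k else 0)"
    by (intro sum.cong) auto
  also have "\<dots> = (if i < n then c * f i else 0)" by (subst sum.delta) auto
  finally show ?thesis .
qed

lemma sum_delta_l': "(\<Sum>k\<in>{0..<(n::nat)}. (if k = i then (c::'k::field) else 0) * f k) = (if i < n then c * f i else 0)"
proof -
  have "(\<Sum>k\<in>{0..<(n::nat)}. (if k = i then c else 0) * f k) = (\<Sum>k\<in>{0..<(n::nat)}. if k = i then c * f k else 0)"
    by (intro sum.cong) auto
  also have "\<dots> = (if i < n then c * f i else 0)" by (subst sum.delta) auto
  finally show ?thesis .
qed

lemma sum_delta_r: "(\<Sum>k\<in>{0..<(n::nat)}. f k * (if k = j then (c::'k::field) else 0)) = (if j < n then f j * c else 0)"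
proof -
  have "(\<Sum>k\<in>{0..<(n::nat)}. f k * (if k = j then c else 0)) = (\<Sum>k\<in>{0..<(n::nat)}. if k = j then f k * c else 0)"
    by (intro sum.cong) auto
  also have "\<dots> = (if j < n then f j * c else 0)" by (subst sum.delta) auto
  finally show ?thesis .
qed

lemma E0_dims[simp]: "dim_row (E0 m n) = m" "dim_col (E0 m n) = n" unfolding E0_def by auto
lemma Dg_dims[simp]: "dim_row (Dg m n t) = n" "dim_col (Dg m n t) = n" unfolding Dg_def by auto

lemma E0_carrier[simp]: "E0 m n \<in> carrier_mat m n" unfolding E0_def by auto
lemma E0T_carrier[simp]: "transpose_mat (E0 m n) \<in> carrier_mat n m" unfolding E0_def by auto
lemma Dg_carrier[simp]: "Dg m n t \<in> carrier_mat n n" unfolding Dg_def by auto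

lemma E0_mult_entry:
  assumes X: "X \<in> carrier_mat n c" and i: "i < m" and j: "j < c" and mn: "m \<le> n"
  shows "(E0 m n * X) $$ (i,j) = X $$ (i,j)"
  using X i j mn unfolding E0_def
  by (simp add: scalar_prod_def row_def col_def sum_delta_l sum_delta_l')

lemma E0T_mult_entry:
  assumes X: "X \<in> carrier_mat m c" and i: "i < n" and j: "j < c"
  shows "(transpose_mat (E0 m n) * X) $$ (i,j) = (if i < m then X $$ (i,j) else 0)"
  using X i j unfolding E0_def
  by (simp add: scalar_prod_def row_def col_def sum_delta_l sum_delta_l')

lemma Dg_mult_entry:
  assumes X: "X \<in> carrier_mat n c" and i: "i < n" and j: "j < c"
  shows "(Dg m n t * X) $$ (i,j) = (if i < m then 1 else t) * X $$ (i,j)"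
  using X i j unfolding Dg_def
  by (simp add: scalar_prod_def row_def col_def sum_delta_l sum_delta_l')

lemma E0_E0T: assumes "m \<le> n" shows "E0 m n * transpose_mat (E0 m n) = (1\<^sub>m m :: 'k::field mat)"
proof (rule eq_matI)
  fix i j assume ij: "i < dim_row (1\<^sub>m m :: 'k mat)" "j < dim_col (1\<^sub>m m :: 'k mat)"
  have "(E0 m n * transpose_mat (E0 m n)) $$ (i, j) = (transpose_mat (E0 m n) :: 'k mat) $$ (i, j)"
    by (rule E0_mult_entry[of _ n m]) (use ij assms in auto)
  also have "\<dots> = (1\<^sub>m m :: 'k mat) $$ (i, j)" using ij assms by (simp add: E0_def)
  finally show "(E0 m n * transpose_mat (E0 m n)) $$ (i, j) = (1\<^sub>m m :: 'k mat) $$ (i, j)" .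
qed auto

lemma E0_Dg: assumes "m \<le> n" shows "E0 m n * Dg m n t = (E0 m n :: 'k::field mat)"
proof (rule eq_matI)
  fix i j assume ij: "i < dim_row (E0 m n :: 'k mat)" "j < dim_col (E0 m n :: 'k mat)"
  have "(E0 m n * Dg m n t) $$ (i, j) = (Dg m n t :: 'k mat) $$ (i, j)"
    by (rule E0_mult_entry[of _ n n]) (use ij assms in auto)
  also have "\<dots> = (E0 m n :: 'k mat) $$ (i, j)" using ij assms by (simp add: E0_def Dg_def)
  finally show "(E0 m n * Dg m n t) $$ (i, j) = (E0 m n :: 'k mat) $$ (i, j)" .
qed (auto simp: Dg_def E0_def)

lemma Dg_mult_Dg: "Dg m n t * Dg m n u = (Dg m n (t * u) :: 'k::field mat)"
proof (rule eq_matI)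
  fix i j assume ij: "i < dim_row (Dg m n (t*u) :: 'k mat)" "j < dim_col (Dg m n (t*u) :: 'k mat)"
  have "(Dg m n t * Dg m n u) $$ (i, j) = (if i < m then 1 else t) * (Dg m n u :: 'k mat) $$ (i, j)"
    by (rule Dg_mult_entry[of _ n n]) (use ij in auto)
  also have "\<dots> = (Dg m n (t*u) :: 'k mat) $$ (i, j)" using ij by (simp add: Dg_def)
  finally show "(Dg m n t * Dg m n u) $$ (i, j) = (Dg m n (t*u) :: 'k mat) $$ (i, j)" .
qed (auto simp: Dg_def)

lemma Dg_one: "Dg m n 1 = (1\<^sub>m n :: 'k::field mat)"
  by (rule eq_matI) (auto simp: Dg_def)

lemma Dg_inv: assumes "t \<noteq> 0" shows "mat_inv (Dg m n t :: 'k::field mat) = Dg m n (1/t)"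
  by (rule mat_inv_unique[of _ n]) (use assms in \<open>auto simp: Dg_mult_Dg Dg_one\<close>)

lemma shift_mult_entry:
  fixes K :: "'k::field mat"
  assumes K: "K \<in> carrier_mat n n" and X: "X \<in> carrier_mat n c" and i: "i < n" and j: "j < c"
  shows "((s \<cdot>\<^sub>m 1\<^sub>m n + K) * X) $$ (i,j) = s * X $$ (i,j) + (K * X) $$ (i,j)"
proof -
  have "(s \<cdot>\<^sub>m 1\<^sub>m n + K) * X = s \<cdot>\<^sub>m 1\<^sub>m n * X + K * X"
    using K X by (intro add_mult_distrib_mat) auto
  also have "s \<cdot>\<^sub>m 1\<^sub>m n * X = s \<cdot>\<^sub>m X" using X mult_smult_assoc_mat[of "1\<^sub>m n" n n X c s] by simp
  finally show ?thesis using K X i j by simp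
qed

lemma entry_poly_const: "\<exists>P. \<forall>s. (c::'k::comm_ring_1) = poly P s" by (intro exI[of _ "[:c:]"]) auto
lemma entry_poly_lin: "\<exists>P. \<forall>s. (a::'k::comm_ring_1) + s * b = poly P s" by (intro exI[of _ "[:a,b:]"]) auto

lemma SI_curve:
  fixes f :: "('a \<Rightarrow> 'k::field mat) \<Rightarrow> 'k"
  assumes f: "f \<in> SI V A tA hA \<beta> \<sigma>" and X: "\<And>s. X s \<in> Rep A tA hA \<beta>"
    and ent: "\<And>a i j. a \<in> A \<Longrightarrow> i < \<beta> (hA a) \<Longrightarrow> j < \<beta> (tA a) \<Longrightarrow> \<exists>P. \<forall>s. X s a $$ (i,j) = poly P s"
  shows "\<exists>P. \<forall>s. f (X s) = poly P s"
proof -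
  from f obtain p where p: "p \<in> poly_funs (rep_coords A tA hA \<beta>)" and fp: "\<forall>W\<in>Rep A tA hA \<beta>. f W = p W"
    unfolding SI_def by auto
  have "\<exists>P. \<forall>s. p (X s) = poly P s"
    by (rule poly_funs_curve[OF p]) (auto simp: rep_coords_def intro: ent)
  thus ?thesis using fp X by auto
qed

lemma SI_const_on_punctured:
  fixes f :: "('a \<Rightarrow> 'k::field_char_0 mat) \<Rightarrow> 'k"
  assumes f: "f \<in> SI V A tA hA \<beta> \<sigma>" and X: "\<And>s. X s \<in> Rep A tA hA \<beta>"
    and ent: "\<And>a i j. a \<in> A \<Longrightarrow> i < \<beta> (hA a) \<Longrightarrow> j < \<beta> (tA a) \<Longrightarrow> \<exists>P. \<forall>s. X s a $$ (i,j) = poly P s"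
    and Y: "\<And>s. Y s \<in> Rep A tA hA \<beta>"
    and entY: "\<And>a i j. a \<in> A \<Longrightarrow> i < \<beta> (hA a) \<Longrightarrow> j < \<beta> (tA a) \<Longrightarrow> \<exists>P. \<forall>s. Y s a $$ (i,j) = poly P s"
    and F: "finite F" and eq: "\<And>s. s \<notin> F \<Longrightarrow> f (X s) = f (Y s)"
  shows "f (X s) = f (Y s)"
proof -
  obtain P where P: "\<forall>s. f (X s) = poly P s" using SI_curve[OF f X ent] by blast
  obtain Q where Q: "\<forall>s. f (Y s) = poly Q s" using SI_curve[OF f Y entY] by blast
  have "P = Q" by (rule poly_eq_cofinite[OF F]) (use P Q eq in auto)
  thus ?thesis using P Q by auto
qed



definition gv0 :: "'v set \<Rightarrow> ('v \<Rightarrow> nat) \<Rightarrow> 'v \<Rightarrow> 'k::field mat \<Rightarrow> 'v \<Rightarrow> 'k mat" where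
  "gv0 V \<beta> v0 M = (\<lambda>x. if x = v0 then M else if x \<in> V then 1\<^sub>m (\<beta> x) else 1\<^sub>m 0)"

lemma gv0_GL:
  assumes "v0 \<in> V" "M \<in> carrier_mat (\<beta> v0) (\<beta> v0)" "det M \<noteq> 0"
  shows "gv0 V \<beta> v0 M \<in> GL V \<beta>"
  using assms unfolding gv0_def GL_def by auto

lemma gv0_weight:
  assumes "\<sigma> v0 = 0"
  shows "weight_char V \<sigma> (gv0 V \<beta> v0 M) = 1"
  unfolding weight_char_def gv0_def
  by (rule prod.neutral) (auto simp: assms)

lemma SI_invariant:
  assumes f: "f \<in> SI V A tA hA \<beta> \<sigma>" and g: "g \<in> GL V \<beta>" and W: "W \<in> Rep A tA hA \<beta>"
    and wc: "weight_char V \<sigma> g = 1"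
  shows "f (gl_act A tA hA g W) = f W"
  using f g W wc unfolding SI_def by auto

lemma det_inv_nonzero:
  fixes M N :: "'k::field mat"
  assumes "M \<in> carrier_mat n n" "N \<in> carrier_mat n n" "M * N = 1\<^sub>m n"
  shows "det M \<noteq> 0"
  using det_mult[OF assms(1,2)] assms(3) by auto

locale case1 =
  fixes V :: "'v set" and A :: "'a set" and tA hA :: "'a \<Rightarrow> 'v"
    and \<beta> :: "'v \<Rightarrow> nat" and \<sigma> :: "'v \<Rightarrow> int" and v0 :: 'v and b :: 'a
  assumes Q: "quiver V A tA hA"
    and acyc: "no_oriented_cycles A tA hA"
    and v0: "v0 \<in> V" and b: "b \<in> A"
    and sigma0: "\<sigma> v0 = 0"
    and tb: "tA b = v0" and outb: "{a \<in> A. tA a = v0} = {b}" and dimle: "\<beta> (hA b) \<le> \<beta> v0"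
begin

lemma no_loop: "a \<in> A \<Longrightarrow> tA a \<noteq> hA a"
  using acyc unfolding no_oriented_cycles_def by blast

lemma hb: "hA b \<noteq> v0" using no_loop[OF b] tb by auto
lemma hbV: "hA b \<in> V" using Q b unfolding quiver_def by auto
lemma tV: "a \<in> A \<Longrightarrow> tA a \<in> V" using Q unfolding quiver_def by auto
lemma hV: "a \<in> A \<Longrightarrow> hA a \<in> V" using Q unfolding quiver_def by auto
lemma out_only: "a \<in> A \<Longrightarrow> tA a = v0 \<Longrightarrow> a = b" using outb by auto
lemma into: "a \<in> A \<Longrightarrow> hA a = v0 \<Longrightarrow> a \<noteq> b \<and> tA a \<noteq> v0"
  using hb out_only no_loop by metis

lemma Rep_carrier: "W \<in> Rep A tA hA \<beta> \<Longrightarrow> a \<in> A \<Longrightarrow> W a \<in> carrier_mat (\<beta> (hA a)) (\<beta> (tA a))"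
  unfolding Rep_def by auto
lemma Rep_out: "W \<in> Rep A tA hA \<beta> \<Longrightarrow> a \<notin> A \<Longrightarrow> W a = 0\<^sub>m 0 0"
  unfolding Rep_def by auto
lemma RepI: "(\<And>a. a \<in> A \<Longrightarrow> W a \<in> carrier_mat (\<beta> (hA a)) (\<beta> (tA a))) \<Longrightarrow> (\<And>a. a \<notin> A \<Longrightarrow> W a = 0\<^sub>m 0 0) \<Longrightarrow> W \<in> Rep A tA hA \<beta>"
  unfolding Rep_def by auto

lemma act_gv0:
  fixes W :: "'a \<Rightarrow> 'k::field mat"
  assumes W: "W \<in> Rep A tA hA \<beta>" and M: "M \<in> carrier_mat (\<beta> v0) (\<beta> v0)"
  shows "gl_act A tA hA (gv0 V \<beta> v0 M) W =
     (\<lambda>a. if a = b then W b * mat_inv M else if a \<in> A \<and> hA a = v0 then M * W a else W a)"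
proof (rule ext)
  fix a
  show "gl_act A tA hA (gv0 V \<beta> v0 M) W a =
     (if a = b then W b * mat_inv M else if a \<in> A \<and> hA a = v0 then M * W a else W a)"
  proof (cases "a \<in> A")
    case False then show ?thesis using b unfolding gl_act_def by auto
  next
    case True
    have Wa: "W a \<in> carrier_mat (\<beta> (hA a)) (\<beta> (tA a))" using Rep_carrier[OF W True] .
    show ?thesis
    proof (cases "a = b")
      case True
      then show ?thesis using hb hbV Wa b tb unfolding gl_act_def gv0_def by auto
    next
      case nb: False
      show ?thesis
      proof (cases "hA a = v0")
        case hv: True
        with into[OF \<open>a \<in> A\<close>] have "tA a \<noteq> v0" by auto
        moreover have "M * W a \<in> carrier_mat (\<beta> v0) (\<beta> (tA a))" using M Wa hv by auto
        ultimately show ?thesis using nb hv True tV[OF True] unfolding gl_act_def gv0_def by auto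
      next
        case hv: False
        have "tA a \<noteq> v0" using out_only[OF True] nb by auto
        then show ?thesis using nb hv True tV[OF True] hV[OF True] Wa unfolding gl_act_def gv0_def by auto
      qed
    qed
  qed
qed

lemma SI_gv0:
  fixes f :: "('a \<Rightarrow> 'k::field mat) \<Rightarrow> 'k"
  assumes f: "f \<in> SI V A tA hA \<beta> \<sigma>" and W: "W \<in> Rep A tA hA \<beta>"
    and M: "M \<in> carrier_mat (\<beta> v0) (\<beta> v0)" and dM: "det M \<noteq> 0"
  shows "f (\<lambda>a. if a = b then W b * mat_inv M else if a \<in> A \<and> hA a = v0 then M * W a else W a) = f W"
  using SI_invariant[OF f gv0_GL[of v0 V M \<beta>, OF v0 M dM] W gv0_weight[of \<sigma> v0 V \<beta> M, OF sigma0]] act_gv0[OF W M] by simp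

end



definition proj1 :: "'a set \<Rightarrow> ('a \<Rightarrow> 'v) \<Rightarrow> 'v \<Rightarrow> 'a \<Rightarrow> ('a \<Rightarrow> 'k::field mat) \<Rightarrow> ('a \<Rightarrow> 'k mat)" where
  "proj1 A hA v0 b W = (\<lambda>a. if a \<in> A \<and> hA a = v0 then W b * W a else if a = b then 0\<^sub>m 0 0 else W a)"

definition sec1 :: "'a set \<Rightarrow> ('a \<Rightarrow> 'v) \<Rightarrow> 'v \<Rightarrow> 'a \<Rightarrow> nat \<Rightarrow> nat \<Rightarrow> ('a \<Rightarrow> 'k::field mat) \<Rightarrow> ('a \<Rightarrow> 'k mat)" where
  "sec1 A hA v0 b m n W = (\<lambda>a. if a = b then E0 m n else if a \<in> A \<and> hA a = v0 then transpose_mat (E0 m n) * W a else W a)"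

context case1
begin

lemma hard:
  fixes f :: "('a \<Rightarrow> 'k::field_char_0 mat) \<Rightarrow> 'k"
  assumes f: "f \<in> SI V A tA hA \<beta> \<sigma>" and W: "W \<in> Rep A tA hA \<beta>"
  shows "f W = f (sec1 A hA v0 b (\<beta> (hA b)) (\<beta> v0) (proj1 A hA v0 b W))"
proof -
  define m where "m = \<beta> (hA b)"
  define n where "n = \<beta> v0"
  have mn: "m \<le> n" using dimle unfolding m_def n_def .
  define E :: "'k mat" where "E = E0 m n"
  define B where "B = W b"
  have B: "B \<in> carrier_mat m n" using Rep_carrier[OF W b] tb unfolding B_def m_def n_def by simp
  have E: "E \<in> carrier_mat m n" "transpose_mat E \<in> carrier_mat n m" unfolding E_def by auto
  define K where "K = transpose_mat E * B"
  have K: "K \<in> carrier_mat n n" using B E unfolding K_def by auto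
  define H where "H s = s \<cdot>\<^sub>m 1\<^sub>m n + K" for s
  have H: "H s \<in> carrier_mat n n" for s using K unfolding H_def by auto
  define Ws where "Ws s = W(b := B + s \<cdot>\<^sub>m E)" for s
  define Y where "Y s = (\<lambda>a. if a = b then E else if a \<in> A \<and> hA a = v0 then H s * W a else W a)" for s
  define Z where "Z s t = (\<lambda>a. if a = b then E else if a \<in> A \<and> hA a = v0 then Dg m n t * (H s * W a) else W a)" for s t
  have Wa: "a \<in> A \<Longrightarrow> hA a = v0 \<Longrightarrow> W a \<in> carrier_mat n (\<beta> (tA a))" for a
    using Rep_carrier[OF W] unfolding n_def by auto
  have Wa': "a \<in> A \<Longrightarrow> W a \<in> carrier_mat (\<beta> (hA a)) (\<beta> (tA a))" for a
    using Rep_carrier[OF W] by auto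
  have bcar: "\<beta> (hA b) = m" "\<beta> (tA b) = n" using tb unfolding m_def n_def by auto
  have Ws_Rep: "Ws s \<in> Rep A tA hA \<beta>" for s
    by (rule RepI) (use B E Wa' Rep_out[OF W] b bcar in \<open>auto simp: Ws_def\<close>)
  have Y_Rep: "Y s \<in> Rep A tA hA \<beta>" for s
  proof (rule RepI)
    fix a assume a: "a \<in> A"
    show "Y s a \<in> carrier_mat (\<beta> (hA a)) (\<beta> (tA a))"
    proof (cases "a \<noteq> b \<and> hA a = v0")
      case True
      then have "H s * W a \<in> carrier_mat n (\<beta> (tA a))" using H[of s] Wa[OF a] by auto
      then show ?thesis using True a unfolding Y_def n_def by auto
    next
      case False then show ?thesis using E bcar Wa'[OF a] unfolding Y_def by auto
    qed
  qed (use Rep_out[OF W] b in \<open>auto simp: Y_def\<close>)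
  have Z_Rep: "Z s t \<in> Rep A tA hA \<beta>" for s t
  proof (rule RepI)
    fix a assume a: "a \<in> A"
    show "Z s t a \<in> carrier_mat (\<beta> (hA a)) (\<beta> (tA a))"
    proof (cases "a \<noteq> b \<and> hA a = v0")
      case True
      then have "Dg m n t * (H s * W a) \<in> carrier_mat n (\<beta> (tA a))" using H[of s] Wa[OF a] by auto
      then show ?thesis using True a unfolding Z_def n_def by auto
    next
      case False then show ?thesis using E bcar Wa'[OF a] unfolding Z_def by auto
    qed
  qed (use Rep_out[OF W] b in \<open>auto simp: Z_def\<close>)
  have EE: "E * transpose_mat E = 1\<^sub>m m" unfolding E_def using E0_E0T[OF mn] .
  have EH: "E * H s = B + s \<cdot>\<^sub>m E" for s
  proof -
    have "E * H s = E * (s \<cdot>\<^sub>m 1\<^sub>m n) + E * K" unfolding H_def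
      using E K by (intro mult_add_distrib_mat) auto
    also have "E * (s \<cdot>\<^sub>m 1\<^sub>m n) = s \<cdot>\<^sub>m E" using E mult_smult_distrib[of E m n "1\<^sub>m n" n s] by simp
    also have "E * K = (E * transpose_mat E) * B" unfolding K_def using E B by (simp add: assoc_mult_mat)
    also have "\<dots> = B" using EE B by simp
    finally show ?thesis using E B comm_add_mat[of "s \<cdot>\<^sub>m E" m n B] by simp
  qed
  have step1: "det (H s) \<noteq> 0 \<Longrightarrow> f (Ws s) = f (Y s)" for s
  proof -
    assume d: "det (H s) \<noteq> 0"
    note inv = mat_inv_props[OF H d]
    have "(B + s \<cdot>\<^sub>m E) * mat_inv (H s) = E"
    proof -
      have "(B + s \<cdot>\<^sub>m E) * mat_inv (H s) = E * H s * mat_inv (H s)" using EH by simp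
      also have "\<dots> = E * (H s * mat_inv (H s))" using assoc_mult_mat[OF E(1) H conjunct1[OF inv]] .

      also have "\<dots> = E" using inv E by simp
      finally show ?thesis .
    qed
    hence "(\<lambda>a. if a = b then Ws s b * mat_inv (H s) else if a \<in> A \<and> hA a = v0 then H s * Ws s a else Ws s a) = Y s"
      using into unfolding Ws_def Y_def by (intro ext) auto
    moreover have "f (\<lambda>a. if a = b then Ws s b * mat_inv (H s) else if a \<in> A \<and> hA a = v0 then H s * Ws s a else Ws s a) = f (Ws s)"
      by (rule SI_gv0[OF f Ws_Rep]) (use H d n_def in auto)
    ultimately show ?thesis by simp
  qed
  have step2: "t \<noteq> 0 \<Longrightarrow> f (Z s t) = f (Y s)" for s t
  proof -
    assume t: "t \<noteq> 0"
    have D: "Dg m n t \<in> carrier_mat (\<beta> v0) (\<beta> v0)" unfolding n_def by simp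
    have dD: "det (Dg m n t :: 'k mat) \<noteq> 0"
      by (rule det_inv_nonzero[of _ n "Dg m n (1/t)"]) (use t in \<open>auto simp: Dg_mult_Dg Dg_one\<close>)
    have "E * mat_inv (Dg m n t) = E" using Dg_inv[OF t] E0_Dg[OF mn] unfolding E_def by simp
    hence "(\<lambda>a. if a = b then Y s b * mat_inv (Dg m n t) else if a \<in> A \<and> hA a = v0 then Dg m n t * Y s a else Y s a) = Z s t"
      using into unfolding Z_def Y_def by (intro ext) auto
    moreover have "f (\<lambda>a. if a = b then Y s b * mat_inv (Dg m n t) else if a \<in> A \<and> hA a = v0 then Dg m n t * Y s a else Y s a) = f (Y s)"
      by (rule SI_gv0[OF f Y_Rep D dD])
    ultimately show ?thesis by simp
  qed
  have entY: "\<exists>P. \<forall>t. Y s a $$ (i,j) = poly P t" for s a i j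
    using entry_poly_const by blast
  have entZt: "\<exists>P. \<forall>t. Z s t a $$ (i,j) = poly P t"
    if "a \<in> A" "i < \<beta> (hA a)" "j < \<beta> (tA a)" for s a i j
  proof (cases "a \<noteq> b \<and> hA a = v0")
    case True
    have c: "H s * W a \<in> carrier_mat n (\<beta> (tA a))" using mult_carrier_mat[OF H[of s] Wa[OF that(1)]] True by auto
    have "Z s t a $$ (i,j) = (if i < m then 1 else t) * (H s * W a) $$ (i,j)" for t
      using Dg_mult_entry[OF c, of i j m t] True that n_def unfolding Z_def by auto
    then show ?thesis
      by (intro exI[of _ "[: if i < m then (H s * W a) $$ (i,j) else 0, if i < m then 0 else (H s * W a) $$ (i,j) :]"]) auto
  next
    case False
    then have "\<And>t. Z s t a = (if a = b then E else W a)" unfolding Z_def by auto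
    then obtain c where c: "\<And>t. Z s t a = c" by blast
    then show ?thesis by (intro exI[of _ "[: c $$ (i,j) :]"]) auto
  qed
  have step3: "f (Z s 0) = f (Y s)" for s
    using SI_const_on_punctured[OF f, of "\<lambda>t. Z s t" "\<lambda>t. Y s" "{0}" 0] Z_Rep Y_Rep entZt entY step2
    by auto
  have entWs: "\<exists>P. \<forall>s. Ws s a $$ (i,j) = poly P s"
    if "a \<in> A" "i < \<beta> (hA a)" "j < \<beta> (tA a)" for a i j
  proof (cases "a = b")
    case True
    have "Ws s a $$ (i,j) = B $$ (i,j) + s * E $$ (i,j)" for s
      using True that B E bcar unfolding Ws_def by auto
    then show ?thesis by (intro exI[of _ "[: B $$ (i,j), E $$ (i,j) :]"]) auto
  next
    case False
    then show ?thesis unfolding Ws_def by (intro exI[of _ "[: W a $$ (i,j) :]"]) auto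
  qed
  have entZs: "\<exists>P. \<forall>s. Z s 0 a $$ (i,j) = poly P s"
    if "a \<in> A" "i < \<beta> (hA a)" "j < \<beta> (tA a)" for a i j
  proof (cases "a \<noteq> b \<and> hA a = v0")
    case True
    have c: "H s * W a \<in> carrier_mat n (\<beta> (tA a))" for s using mult_carrier_mat[OF H[of s] Wa[OF that(1)]] True by auto
    have "Z s 0 a $$ (i,j) = (if i < m then 1 else 0) * (s * W a $$ (i,j) + (K * W a) $$ (i,j))" for s
      using Dg_mult_entry[OF c, of i j m 0] True that n_def
        shift_mult_entry[OF K Wa[OF \<open>a \<in> A\<close>], of i j s] unfolding Z_def H_def by auto
    then show ?thesis
      by (intro exI[of _ "[: if i < m then (K * W a) $$ (i,j) else 0, if i < m then W a $$ (i,j) else 0 :]"])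
        (auto simp: algebra_simps)
  next
    case False
    then have "\<And>s. Z s 0 a = (if a = b then E else W a)" unfolding Z_def by auto
    then obtain c where c: "\<And>s. Z s 0 a = c" by blast
    then show ?thesis by (intro exI[of _ "[: c $$ (i,j) :]"]) auto
  qed
  have fin: "finite {s. det (H s) = 0}" unfolding H_def by (rule det_shift_cofinite[OF K])
  have step4: "f (Ws 0) = f (Z 0 0)"
    using SI_const_on_punctured[OF f, of Ws "\<lambda>s. Z s 0" "{s. det (H s) = 0}" 0] Ws_Rep Z_Rep entWs entZs
      fin step1 step3 by auto
  have "B + 0 \<cdot>\<^sub>m E = B" using B E by (intro eq_matI) auto
  hence "Ws 0 = W" unfolding Ws_def B_def by (intro ext) auto
  moreover have "Z 0 0 = sec1 A hA v0 b m n (proj1 A hA v0 b W)"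
  proof (rule ext)
    fix a
    show "Z 0 0 a = sec1 A hA v0 b m n (proj1 A hA v0 b W) a"
    proof (cases "a \<in> A \<and> hA a = v0")
      case True
      with into have nb: "a \<noteq> b" by auto
      have c1: "H 0 * W a \<in> carrier_mat n (\<beta> (tA a))" using mult_carrier_mat[OF H[of 0] Wa] True by auto
      have c2: "B * W a \<in> carrier_mat m (\<beta> (tA a))" using mult_carrier_mat[OF B Wa] True by auto
      have "Dg m n 0 * (H 0 * W a) = transpose_mat E * (B * W a)"
      proof (rule eq_matI)
        fix i j assume ij: "i < dim_row (transpose_mat E * (B * W a))" "j < dim_col (transpose_mat E * (B * W a))"
        hence ij': "i < n" "j < \<beta> (tA a)" using E c2 by auto
        have HW: "H 0 * W a = transpose_mat E * (B * W a)"
        proof -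
          have "0 \<cdot>\<^sub>m 1\<^sub>m n + K = K" using K by (intro eq_matI) auto
          hence "H 0 * W a = K * W a" unfolding H_def by simp
          thus ?thesis unfolding K_def using assoc_mult_mat[OF E(2) B Wa[OF conjunct1[OF True] conjunct2[OF True]]] by simp
        qed
        show "(Dg m n 0 * (H 0 * W a)) $$ (i, j) = (transpose_mat E * (B * W a)) $$ (i, j)"
          using Dg_mult_entry[OF c1 ij', of m 0] E0T_mult_entry[OF c2 ij'] unfolding HW E_def
          by auto
      qed (use E c1 c2 in auto)
      then show ?thesis using True nb unfolding Z_def sec1_def proj1_def E_def B_def by auto
    next
      case False
      then show ?thesis unfolding Z_def sec1_def proj1_def E_def by auto
    qed
  qed
  ultimately show ?thesis using step4 unfolding m_def n_def by simp
qed

end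



lemma gl_act_Rep:
  fixes W :: "'a \<Rightarrow> 'k::field mat"
  assumes Q: "quiver V A tA hA" and g: "g \<in> GL V \<beta>" and W: "W \<in> Rep A tA hA \<beta>"
  shows "gl_act A tA hA g W \<in> Rep A tA hA \<beta>"
  unfolding Rep_def
proof (intro CollectI conjI ballI allI impI)
  fix a assume a: "a \<in> A"
  have t: "tA a \<in> V" and h: "hA a \<in> V" using Q a unfolding quiver_def by auto
  have gt: "g (tA a) \<in> carrier_mat (\<beta> (tA a)) (\<beta> (tA a))" "det (g (tA a)) \<noteq> 0"
    using g t unfolding GL_def by auto
  have gh: "g (hA a) \<in> carrier_mat (\<beta> (hA a)) (\<beta> (hA a))" using g h unfolding GL_def by auto
  have Wa: "W a \<in> carrier_mat (\<beta> (hA a)) (\<beta> (tA a))" using W a unfolding Rep_def by auto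
  have "mat_inv (g (tA a)) \<in> carrier_mat (\<beta> (tA a)) (\<beta> (tA a))" using mat_inv_props[OF gt] by auto
  then show "gl_act A tA hA g W a \<in> carrier_mat (\<beta> (hA a)) (\<beta> (tA a))"
    using a gh Wa unfolding gl_act_def by auto
next
  fix a assume "a \<notin> A" then show "gl_act A tA hA g W a = 0\<^sub>m 0 0"
    using W unfolding gl_act_def Rep_def by auto
qed

lemma cancel_mid:
  fixes X :: "'k::field mat"
  assumes X: "X \<in> carrier_mat r m" and Bm: "Bm \<in> carrier_mat m n" and I: "I \<in> carrier_mat n n"
    and G: "G \<in> carrier_mat n n" and IG: "I * G = 1\<^sub>m n" and Wa: "Wa \<in> carrier_mat n c"
    and J: "J \<in> carrier_mat c d"
  shows "(X * Bm * I) * (G * Wa * J) = X * (Bm * Wa) * J"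
proof -
  have XB: "X * Bm \<in> carrier_mat r n" using X Bm by auto
  have XBI: "X * Bm * I \<in> carrier_mat r n" using XB I by auto
  have WJ: "Wa * J \<in> carrier_mat n d" using Wa J by auto
  have "(X * Bm * I) * (G * Wa * J) = (X * Bm * I) * (G * (Wa * J))"
    using assoc_mult_mat[OF G Wa J] by simp
  also have "\<dots> = ((X * Bm * I) * G) * (Wa * J)"
    using assoc_mult_mat[OF XBI G WJ] by simp
  also have "(X * Bm * I) * G = (X * Bm) * (I * G)" using assoc_mult_mat[OF XB I G] .
  also have "\<dots> = X * Bm" using IG right_mult_one_mat[OF XB] by simp
  also have "(X * Bm) * (Wa * J) = X * (Bm * (Wa * J))" using assoc_mult_mat[OF X Bm WJ] .
  also have "Bm * (Wa * J) = (Bm * Wa) * J" using assoc_mult_mat[OF Bm Wa J] by simp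
  also have "X * ((Bm * Wa) * J) = X * (Bm * Wa) * J"
    using assoc_mult_mat[OF X mult_carrier_mat[OF Bm Wa] J] by simp
  finally show ?thesis .
qed

lemma Rep_I: "(\<And>a. a \<in> A \<Longrightarrow> W a \<in> carrier_mat (\<beta> (hA a)) (\<beta> (tA a))) \<Longrightarrow> (\<And>a. a \<notin> A \<Longrightarrow> W a = 0\<^sub>m 0 0) \<Longrightarrow> W \<in> Rep A tA hA \<beta>"
  unfolding Rep_def by auto

context case1
begin

abbreviation "hA1 \<equiv> (\<lambda>a. if hA a = v0 then hA b else hA a)"

lemma Q1: "quiver (V - {v0}) (A - {b}) tA hA1"
  unfolding quiver_def
proof (intro conjI ballI)
  show "finite (V - {v0})" "finite (A - {b})" using Q unfolding quiver_def by auto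
next
  fix a assume a: "a \<in> A - {b}"
  have "tA a \<noteq> v0" using a out_only by blast
  then show "tA a \<in> V - {v0}" using tV a by blast
  show "hA1 a \<in> V - {v0}"
  proof (cases "hA a = v0")
    case True then show ?thesis using hbV hb by simp
  next
    case False then show ?thesis using hV a by simp
  qed
qed

lemma proj_Rep:
  fixes W :: "'a \<Rightarrow> 'k::field mat"
  assumes W: "W \<in> Rep A tA hA \<beta>"
  shows "proj1 A hA v0 b W \<in> Rep (A - {b}) tA hA1 \<beta>"
proof (rule Rep_I)
  fix a assume a: "a \<in> A - {b}"
  show "proj1 A hA v0 b W a \<in> carrier_mat (\<beta> (hA1 a)) (\<beta> (tA a))"
  proof (cases "hA a = v0")
    case True
    have Wb: "W b \<in> carrier_mat (\<beta> (hA b)) (\<beta> v0)" using Rep_carrier[OF W b] tb by simp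
    have Wa: "W a \<in> carrier_mat (\<beta> v0) (\<beta> (tA a))" using Rep_carrier[OF W, of a] a True by simp
    have "proj1 A hA v0 b W a = W b * W a" using a True unfolding proj1_def by simp
    then show ?thesis using mult_carrier_mat[OF Wb Wa] True by simp
  next
    case False
    have "proj1 A hA v0 b W a = W a" using a False unfolding proj1_def by simp
    then show ?thesis using a Rep_carrier[OF W, of a] False by simp
  qed
next
  fix a assume "a \<notin> A - {b}"
  show "proj1 A hA v0 b W a = 0\<^sub>m 0 0"
  proof (cases "a = b")
    case True then show ?thesis using hb unfolding proj1_def by simp
  next
    case False
    then have "a \<notin> A" using \<open>a \<notin> A - {b}\<close> by simp
    then show ?thesis using Rep_out[OF W, of a] unfolding proj1_def by simp
  qed
qed

lemma sec_Rep:
  fixes W :: "'a \<Rightarrow> 'k::field mat"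
  assumes W: "W \<in> Rep (A - {b}) tA hA1 \<beta>"
  shows "sec1 A hA v0 b (\<beta> (hA b)) (\<beta> v0) W \<in> Rep A tA hA \<beta>"
proof (rule Rep_I)
  fix a assume a: "a \<in> A"
  have Wa: "a \<noteq> b \<Longrightarrow> W a \<in> carrier_mat (\<beta> (hA1 a)) (\<beta> (tA a))" using W a unfolding Rep_def by auto
  show "sec1 A hA v0 b (\<beta> (hA b)) (\<beta> v0) W a \<in> carrier_mat (\<beta> (hA a)) (\<beta> (tA a))"
  proof (cases "a = b")
    case True then show ?thesis using tb unfolding sec1_def by auto
  next
    case nb: False
    show ?thesis
    proof (cases "hA a = v0")
      case True
      have "transpose_mat (E0 (\<beta> (hA b)) (\<beta> v0)) * W a \<in> carrier_mat (\<beta> v0) (\<beta> (tA a))"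
        using Wa[OF nb] True by (intro mult_carrier_mat[of _ _ "\<beta> (hA b)"]) auto
      then show ?thesis using a nb True unfolding sec1_def by auto
    next
      case False then show ?thesis using a nb Wa[OF nb] unfolding sec1_def by auto
    qed
  qed
next
  fix a assume "a \<notin> A"
  moreover have "W a = 0\<^sub>m 0 0" using W \<open>a \<notin> A\<close> unfolding Rep_def by blast
  ultimately show "sec1 A hA v0 b (\<beta> (hA b)) (\<beta> v0) W a = 0\<^sub>m 0 0" using b unfolding sec1_def by auto
qed

lemma proj_sec:
  fixes W :: "'a \<Rightarrow> 'k::field mat"
  assumes W: "W \<in> Rep (A - {b}) tA hA1 \<beta>"
  shows "proj1 A hA v0 b (sec1 A hA v0 b (\<beta> (hA b)) (\<beta> v0) W) = W"
proof (rule ext)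
  fix a
  show "proj1 A hA v0 b (sec1 A hA v0 b (\<beta> (hA b)) (\<beta> v0) W) a = W a"
  proof (cases "a \<in> A \<and> hA a = v0")
    case True
    with into have nb: "a \<noteq> b" by auto
    have "W a \<in> carrier_mat (\<beta> (hA1 a)) (\<beta> (tA a))" using W True nb unfolding Rep_def by blast
    hence Wa: "W a \<in> carrier_mat (\<beta> (hA b)) (\<beta> (tA a))" using True by simp
    have "E0 (\<beta> (hA b)) (\<beta> v0) * (transpose_mat (E0 (\<beta> (hA b)) (\<beta> v0)) * W a)
        = (E0 (\<beta> (hA b)) (\<beta> v0) * transpose_mat (E0 (\<beta> (hA b)) (\<beta> v0))) * W a"
      using assoc_mult_mat[OF E0_carrier E0T_carrier Wa] by simp
    also have "\<dots> = W a" by (subst E0_E0T[OF dimle]) (use Wa in simp)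
    finally show ?thesis using True nb unfolding proj1_def sec1_def by auto
  next
    case False
    show ?thesis
    proof (cases "a = b")
      case True
      have "W b = 0\<^sub>m 0 0" using W unfolding Rep_def by blast
      then show ?thesis using True False hb b unfolding proj1_def by simp
    next
      case nb: False
      then show ?thesis using False unfolding proj1_def sec1_def by auto
    qed
  qed
qed

definition gres :: "('v \<Rightarrow> 'k::field mat) \<Rightarrow> 'v \<Rightarrow> 'k mat" where
  "gres g = g(v0 := 1\<^sub>m 0)"

lemma gres_GL: "g \<in> GL V \<beta> \<Longrightarrow> gres g \<in> GL (V - {v0}) \<beta>"
  unfolding GL_def gres_def by auto

lemma weight_restrict:
  fixes g :: "'v \<Rightarrow> 'k::field mat"
  assumes that: "\<And>x. x \<in> V - {v0} \<Longrightarrow> g' x = g x"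
  shows "weight_char (V - {v0}) \<sigma> g' = weight_char V \<sigma> g"
proof -
  have fin: "finite V" using Q unfolding quiver_def by auto
  have "weight_char V \<sigma> g = det (g v0) powi \<sigma> v0 * (\<Prod>x\<in>V - {v0}. det (g x) powi \<sigma> x)"
    unfolding weight_char_def using prod.remove[OF fin v0] by simp
  also have "\<dots> = (\<Prod>x\<in>V - {v0}. det (g' x) powi \<sigma> x)" using sigma0 that by simp
  finally show ?thesis unfolding weight_char_def by simp
qed

lemma proj_equiv:
  fixes W :: "'a \<Rightarrow> 'k::field mat"
  assumes g: "g \<in> GL V \<beta>" and W: "W \<in> Rep A tA hA \<beta>"
  shows "proj1 A hA v0 b (gl_act A tA hA g W) = gl_act (A - {b}) tA hA1 (gres g) (proj1 A hA v0 b W)"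
proof (rule ext)
  fix a
  show "proj1 A hA v0 b (gl_act A tA hA g W) a = gl_act (A - {b}) tA hA1 (gres g) (proj1 A hA v0 b W) a"
  proof (cases "a \<in> A")
    case False then show ?thesis using b unfolding proj1_def gl_act_def by auto
  next
    case a: True
    show ?thesis
    proof (cases "a = b")
      case True then show ?thesis using hb unfolding proj1_def gl_act_def by auto
    next
      case nb: False
      have tav: "tA a \<noteq> v0" using out_only[OF a] nb by auto
      have gt: "g (tA a) \<in> carrier_mat (\<beta> (tA a)) (\<beta> (tA a))" "det (g (tA a)) \<noteq> 0"
        using g tV[OF a] unfolding GL_def by auto
      have gti: "mat_inv (g (tA a)) \<in> carrier_mat (\<beta> (tA a)) (\<beta> (tA a))" using mat_inv_props[OF gt] by auto
      show ?thesis
      proof (cases "hA a = v0")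
        case True
        have gv: "g v0 \<in> carrier_mat (\<beta> v0) (\<beta> v0)" "det (g v0) \<noteq> 0" using g v0 unfolding GL_def by auto
        note gvi = mat_inv_props[OF gv]
        have gw: "g (hA b) \<in> carrier_mat (\<beta> (hA b)) (\<beta> (hA b))" using g hbV unfolding GL_def by auto
        have Wb: "W b \<in> carrier_mat (\<beta> (hA b)) (\<beta> v0)" using Rep_carrier[OF W b] tb by simp
        have Wa: "W a \<in> carrier_mat (\<beta> v0) (\<beta> (tA a))" using Rep_carrier[OF W a] True by simp
        have "(g (hA b) * W b * mat_inv (g v0)) * (g v0 * W a * mat_inv (g (tA a)))
           = g (hA b) * (W b * W a) * mat_inv (g (tA a))"
          by (rule cancel_mid[OF gw Wb _ gv(1) _ Wa gti]) (use gvi in auto)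
        moreover have "proj1 A hA v0 b (gl_act A tA hA g W) a = gl_act A tA hA g W b * gl_act A tA hA g W a"
          unfolding proj1_def using a True by simp
        moreover have "gl_act A tA hA g W b = g (hA b) * W b * mat_inv (g v0)" unfolding gl_act_def using b tb by simp
        moreover have "gl_act A tA hA g W a = g v0 * W a * mat_inv (g (tA a))" unfolding gl_act_def using a True by simp
        moreover have "gl_act (A - {b}) tA hA1 (gres g) (proj1 A hA v0 b W) a
            = gres g (hA b) * proj1 A hA v0 b W a * mat_inv (gres g (tA a))"
          unfolding gl_act_def using a nb True by simp
        moreover have "proj1 A hA v0 b W a = W b * W a" unfolding proj1_def using a True by simp
        moreover have "gres g (hA b) = g (hA b)" "gres g (tA a) = g (tA a)" unfolding gres_def using hb tav by auto
        ultimately show ?thesis by simp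
      next
        case False
        have "proj1 A hA v0 b (gl_act A tA hA g W) a = gl_act A tA hA g W a"
          unfolding proj1_def using a False nb by simp
        moreover have "gl_act A tA hA g W a = g (hA a) * W a * mat_inv (g (tA a))" unfolding gl_act_def using a by simp
        moreover have "gl_act (A - {b}) tA hA1 (gres g) (proj1 A hA v0 b W) a
            = gres g (hA a) * proj1 A hA v0 b W a * mat_inv (gres g (tA a))"
          unfolding gl_act_def using a nb False by simp
        moreover have "proj1 A hA v0 b W a = W a" unfolding proj1_def using a False nb by simp
        moreover have "gres g (hA a) = g (hA a)" "gres g (tA a) = g (tA a)" unfolding gres_def using False tav by auto
        ultimately show ?thesis by simp
      qed
    qed
  qed
qed

lemma proj_poly:
  fixes p :: "('a \<Rightarrow> 'k::field mat) \<Rightarrow> 'k"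
  assumes p: "p \<in> poly_funs (rep_coords (A - {b}) tA hA1 \<beta>)"
  shows "\<exists>q \<in> poly_funs (rep_coords A tA hA \<beta>). \<forall>W\<in>Rep A tA hA \<beta>. p (proj1 A hA v0 b W) = q W"
proof (rule poly_funs_subst[OF p])
  fix c :: "('a \<Rightarrow> 'k mat) \<Rightarrow> 'k" assume "c \<in> rep_coords (A - {b}) tA hA1 \<beta>"
  then obtain a i j where c: "c = (\<lambda>W. W a $$ (i, j))" and a: "a \<in> A" "a \<noteq> b"
    and i: "i < \<beta> (hA1 a)" and j: "j < \<beta> (tA a)" unfolding rep_coords_def by auto
  show "\<exists>q\<in>poly_funs (rep_coords A tA hA \<beta>). \<forall>W\<in>Rep A tA hA \<beta>. c (proj1 A hA v0 b W) = q W"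
  proof (cases "hA a = v0")
    case True
    let ?q = "\<lambda>W::'a \<Rightarrow> 'k mat. \<Sum>k\<in>{0..<\<beta> v0}. W b $$ (i, k) * W a $$ (k, j)"
    have "?q \<in> poly_funs (rep_coords A tA hA \<beta>)"
    proof (rule poly_funs_sum)
      fix k assume k: "k \<in> {0..<\<beta> v0}"
      have "(\<lambda>W::'a \<Rightarrow> 'k mat. W b $$ (i, k)) \<in> rep_coords A tA hA \<beta>"
        unfolding rep_coords_def by (rule CollectI, rule exI[of _ b], rule exI[of _ i], rule exI[of _ k]) (use b i True k tb in auto)
      moreover have "(\<lambda>W::'a \<Rightarrow> 'k mat. W a $$ (k, j)) \<in> rep_coords A tA hA \<beta>"
        unfolding rep_coords_def by (rule CollectI, rule exI[of _ a], rule exI[of _ k], rule exI[of _ j]) (use a j True k in auto)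
      ultimately show "(\<lambda>W::'a \<Rightarrow> 'k mat. W b $$ (i, k) * W a $$ (k, j)) \<in> poly_funs (rep_coords A tA hA \<beta>)"
        by (intro poly_funs.pf_mult poly_funs.pf_coord)
    qed auto
    moreover have "\<forall>W\<in>Rep A tA hA \<beta>. c (proj1 A hA v0 b W) = ?q W"
    proof
      fix W :: "'a \<Rightarrow> 'k mat" assume W: "W \<in> Rep A tA hA \<beta>"
      have Wb: "W b \<in> carrier_mat (\<beta> (hA b)) (\<beta> v0)" using Rep_carrier[OF W b] tb by simp
      have Wa: "W a \<in> carrier_mat (\<beta> v0) (\<beta> (tA a))" using Rep_carrier[OF W a(1)] True by simp
      show "c (proj1 A hA v0 b W) = ?q W"
        using Wb Wa i j True a unfolding c proj1_def by (auto simp: scalar_prod_def)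
    qed
    ultimately show ?thesis by (intro bexI[of _ ?q]) auto
  next
    case False
    have "c \<in> rep_coords A tA hA \<beta>" unfolding rep_coords_def c using a i j False by auto
    moreover have "\<forall>W\<in>Rep A tA hA \<beta>. c (proj1 A hA v0 b W) = c W"
      using False a unfolding c proj1_def by auto
    ultimately show ?thesis by (intro bexI[of _ c] poly_funs.pf_coord) auto
  qed
qed

lemma sec_poly:
  fixes p :: "('a \<Rightarrow> 'k::field mat) \<Rightarrow> 'k"
  assumes p: "p \<in> poly_funs (rep_coords A tA hA \<beta>)"
  shows "\<exists>q \<in> poly_funs (rep_coords (A - {b}) tA hA1 \<beta>). \<forall>W\<in>Rep (A - {b}) tA hA1 \<beta>.
            p (sec1 A hA v0 b (\<beta> (hA b)) (\<beta> v0) W) = q W"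
proof (rule poly_funs_subst[OF p])
  fix c :: "('a \<Rightarrow> 'k mat) \<Rightarrow> 'k" assume "c \<in> rep_coords A tA hA \<beta>"
  then obtain a i j where c: "c = (\<lambda>W. W a $$ (i, j))" and a: "a \<in> A"
    and i: "i < \<beta> (hA a)" and j: "j < \<beta> (tA a)" unfolding rep_coords_def by auto
  show "\<exists>q\<in>poly_funs (rep_coords (A - {b}) tA hA1 \<beta>). \<forall>W\<in>Rep (A - {b}) tA hA1 \<beta>.
            c (sec1 A hA v0 b (\<beta> (hA b)) (\<beta> v0) W) = q W"
  proof (cases "a = b")
    case True
    show ?thesis
      by (rule bexI[of _ "\<lambda>_. E0 (\<beta> (hA b)) (\<beta> v0) $$ (i, j)"])
        (use True in \<open>auto simp: c sec1_def intro: poly_funs.pf_const\<close>)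
  next
    case nb: False
    have cc: "c \<in> rep_coords (A - {b}) tA hA1 \<beta>"
      if "hA a = v0 \<Longrightarrow> i < \<beta> (hA b)" unfolding rep_coords_def c using a nb i j that by auto
    show ?thesis
    proof (cases "hA a = v0")
      case True
      show ?thesis
      proof (cases "i < \<beta> (hA b)")
        case ib: True
        have "\<forall>W\<in>Rep (A - {b}) tA hA1 \<beta>. c (sec1 A hA v0 b (\<beta> (hA b)) (\<beta> v0) W) = c W"
        proof
          fix W :: "'a \<Rightarrow> 'k mat" assume W: "W \<in> Rep (A - {b}) tA hA1 \<beta>"
          have "W a \<in> carrier_mat (\<beta> (hA1 a)) (\<beta> (tA a))" using W a nb unfolding Rep_def by blast
          hence Wa: "W a \<in> carrier_mat (\<beta> (hA b)) (\<beta> (tA a))" using True by simp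
          show "c (sec1 A hA v0 b (\<beta> (hA b)) (\<beta> v0) W) = c W"
            using E0T_mult_entry[OF Wa, of i "\<beta> v0" j] i j True ib nb a unfolding c sec1_def by auto
        qed
        then show ?thesis using cc ib by (intro bexI[of _ c] poly_funs.pf_coord) auto
      next
        case ib: False
        have "\<forall>W\<in>Rep (A - {b}) tA hA1 \<beta>. c (sec1 A hA v0 b (\<beta> (hA b)) (\<beta> v0) W) = 0"
        proof
          fix W :: "'a \<Rightarrow> 'k mat" assume W: "W \<in> Rep (A - {b}) tA hA1 \<beta>"
          have "W a \<in> carrier_mat (\<beta> (hA1 a)) (\<beta> (tA a))" using W a nb unfolding Rep_def by blast
          hence Wa: "W a \<in> carrier_mat (\<beta> (hA b)) (\<beta> (tA a))" using True by simp
          show "c (sec1 A hA v0 b (\<beta> (hA b)) (\<beta> v0) W) = 0"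
            using E0T_mult_entry[OF Wa, of i "\<beta> v0" j] i j True ib nb a unfolding c sec1_def by auto
        qed
        then show ?thesis by (intro bexI[of _ "\<lambda>_. 0"] poly_funs.pf_const) auto
      qed
    next
      case False
      have "\<forall>W\<in>Rep (A - {b}) tA hA1 \<beta>. c (sec1 A hA v0 b (\<beta> (hA b)) (\<beta> v0) W) = c W"
        using False nb unfolding c sec1_def by auto
      then show ?thesis using cc False by (intro bexI[of _ c] poly_funs.pf_coord) auto
    qed
  qed
qed

end


context case1
begin

lemma iso1:
  "lin_iso (SI V A tA hA \<beta> \<sigma> :: (('a \<Rightarrow> 'k::field_char_0 mat) \<Rightarrow> 'k) set)
           (SI (V - {v0}) (A - {b}) tA hA1 \<beta> \<sigma>)"
proof -
  let ?S = "SI V A tA hA \<beta> \<sigma> :: (('a \<Rightarrow> 'k mat) \<Rightarrow> 'k) set"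
  let ?S' = "SI (V - {v0}) (A - {b}) tA hA1 \<beta> \<sigma> :: (('a \<Rightarrow> 'k mat) \<Rightarrow> 'k) set"
  let ?R = "Rep A tA hA \<beta> :: ('a \<Rightarrow> 'k mat) set"
  let ?R' = "Rep (A - {b}) tA hA1 \<beta> :: ('a \<Rightarrow> 'k mat) set"
  let ?sec = "sec1 A hA v0 b (\<beta> (hA b)) (\<beta> v0) :: ('a \<Rightarrow> 'k mat) \<Rightarrow> _"
  let ?proj = "proj1 A hA v0 b :: ('a \<Rightarrow> 'k mat) \<Rightarrow> _"
  define \<psi> where "\<psi> f = (\<lambda>W. if W \<in> ?R' then f (?sec W) else 0)" for f :: "('a \<Rightarrow> 'k mat) \<Rightarrow> 'k"
  define \<phi> where "\<phi> F = (\<lambda>W. if W \<in> ?R then F (?proj W) else 0)" for F :: "('a \<Rightarrow> 'k mat) \<Rightarrow> 'k"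
  have psiS: "\<psi> f \<in> ?S'" if f: "f \<in> ?S" for f
  proof -
    from f obtain p where p: "p \<in> poly_funs (rep_coords A tA hA \<beta>)" and fp: "\<forall>W\<in>?R. f W = p W"
      unfolding SI_def by auto
    obtain q where q: "q \<in> poly_funs (rep_coords (A - {b}) tA hA1 \<beta>)" and pq: "\<forall>W\<in>?R'. p (?sec W) = q W"
      using sec_poly[OF p] by blast
    have P1: "\<exists>q \<in> poly_funs (rep_coords (A - {b}) tA hA1 \<beta>). \<forall>W\<in>?R'. \<psi> f W = q W"
    proof (intro bexI[of _ q] ballI)
      fix W assume W: "W \<in> ?R'"
      have "?sec W \<in> ?R" by (rule sec_Rep[OF W])
      then show "\<psi> f W = q W" using fp pq W unfolding \<psi>_def by simp
    qed (rule q)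
    have P2: "\<forall>W. W \<notin> ?R' \<longrightarrow> \<psi> f W = 0" unfolding \<psi>_def by auto
    have P3: "\<psi> f (gl_act (A - {b}) tA hA1 g' W) = inverse (weight_char (V - {v0}) \<sigma> g') * \<psi> f W"
      if g': "g' \<in> GL (V - {v0}) \<beta>" and W: "W \<in> ?R'" for g' W
    proof -
      define g where "g = g'(v0 := 1\<^sub>m (\<beta> v0))"
      have gGL: "g \<in> GL V \<beta>" using g' v0 unfolding g_def GL_def by auto
      have gres: "gres g = g'" using g' unfolding gres_def g_def GL_def by (intro ext) auto
      have wc: "weight_char (V - {v0}) \<sigma> g' = weight_char V \<sigma> g"
        by (rule weight_restrict) (auto simp: g_def)
      have X: "?sec W \<in> ?R" using sec_Rep[OF W] .
      have gX: "gl_act A tA hA g (?sec W) \<in> ?R" by (rule gl_act_Rep[OF Q gGL X])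
      have gW: "gl_act (A - {b}) tA hA1 g' W \<in> ?R'" by (rule gl_act_Rep[OF Q1 g' W])
      have pr: "?proj (gl_act A tA hA g (?sec W)) = gl_act (A - {b}) tA hA1 g' W"
        using proj_equiv[OF gGL X] proj_sec[OF W] gres by simp
      have "\<psi> f (gl_act (A - {b}) tA hA1 g' W) = f (?sec (?proj (gl_act A tA hA g (?sec W))))"
        using gW pr unfolding \<psi>_def by simp
      also have "\<dots> = f (gl_act A tA hA g (?sec W))" using hard[OF f gX] by simp
      also have "\<dots> = inverse (weight_char V \<sigma> g) * f (?sec W)" using f gGL X unfolding SI_def by blast
      also have "\<dots> = inverse (weight_char (V - {v0}) \<sigma> g') * \<psi> f W" using wc W unfolding \<psi>_def by simp
      finally show ?thesis .
    qed
    show ?thesis unfolding SI_def using P1 P2 P3 by blast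
  qed
  have phiS: "\<phi> F \<in> ?S" if F: "F \<in> ?S'" for F
  proof -
    from F obtain p where p: "p \<in> poly_funs (rep_coords (A - {b}) tA hA1 \<beta>)" and Fp: "\<forall>W\<in>?R'. F W = p W"
      unfolding SI_def by auto
    obtain q where q: "q \<in> poly_funs (rep_coords A tA hA \<beta>)" and pq: "\<forall>W\<in>?R. p (?proj W) = q W"
      using proj_poly[OF p] by blast
    have P1: "\<exists>q \<in> poly_funs (rep_coords A tA hA \<beta>). \<forall>W\<in>?R. \<phi> F W = q W"
    proof (intro bexI[of _ q] ballI)
      fix W assume W: "W \<in> ?R"
      have "?proj W \<in> ?R'" by (rule proj_Rep[OF W])
      then show "\<phi> F W = q W" using Fp pq W unfolding \<phi>_def by simp
    qed (rule q)
    have P2: "\<forall>W. W \<notin> ?R \<longrightarrow> \<phi> F W = 0" unfolding \<phi>_def by auto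
    have P3: "\<phi> F (gl_act A tA hA g W) = inverse (weight_char V \<sigma> g) * \<phi> F W"
      if g: "g \<in> GL V \<beta>" and W: "W \<in> ?R" for g W
    proof -
      have gW: "gl_act A tA hA g W \<in> ?R" by (rule gl_act_Rep[OF Q g W])
      have wc: "weight_char (V - {v0}) \<sigma> (gres g) = weight_char V \<sigma> g"
        by (rule weight_restrict) (auto simp: gres_def)
      have "\<phi> F (gl_act A tA hA g W) = F (gl_act (A - {b}) tA hA1 (gres g) (?proj W))"
        using gW proj_equiv[OF g W] unfolding \<phi>_def by simp
      also have "\<dots> = inverse (weight_char (V - {v0}) \<sigma> (gres g)) * F (?proj W)"
        using F gres_GL[OF g] proj_Rep[OF W] unfolding SI_def by blast
      also have "\<dots> = inverse (weight_char V \<sigma> g) * \<phi> F W" using wc W unfolding \<phi>_def by simp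
      finally show ?thesis .
    qed
    show ?thesis unfolding SI_def using P1 P2 P3 by blast
  qed
  have psiphi: "\<psi> (\<phi> F) = F" if F: "F \<in> ?S'" for F
  proof (rule ext)
    fix W
    show "\<psi> (\<phi> F) W = F W"
    proof (cases "W \<in> ?R'")
      case True
      then show ?thesis using sec_Rep[OF True] proj_sec[OF True] unfolding \<psi>_def \<phi>_def by simp
    next
      case False
      then show ?thesis using F unfolding \<psi>_def SI_def by auto
    qed
  qed
  have inj: "inj_on \<psi> ?S"
  proof (rule inj_onI)
    fix f1 f2 assume f1: "f1 \<in> ?S" and f2: "f2 \<in> ?S" and eq: "\<psi> f1 = \<psi> f2"
    show "f1 = f2"
    proof (rule ext)
      fix W
      show "f1 W = f2 W"
      proof (cases "W \<in> ?R")
        case True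
        have PR: "?proj W \<in> ?R'" using proj_Rep[OF True] .
        have "f1 W = \<psi> f1 (?proj W)" using hard[OF f1 True] PR unfolding \<psi>_def by simp
        also have "\<dots> = \<psi> f2 (?proj W)" using eq by simp
        also have "\<dots> = f2 W" using hard[OF f2 True] PR unfolding \<psi>_def by simp
        finally show ?thesis .
      next
        case False
        then show ?thesis using f1 f2 unfolding SI_def by auto
      qed
    qed
  qed
  have img: "\<psi> ` ?S = ?S'"
  proof
    show "\<psi> ` ?S \<subseteq> ?S'" using psiS by auto
    show "?S' \<subseteq> \<psi> ` ?S"
    proof
      fix F assume F: "F \<in> ?S'"
      then have "F = \<psi> (\<phi> F)" using psiphi by simp
      then show "F \<in> \<psi> ` ?S" using phiS[OF F] by blast
    qed
  qed
  have lin: "\<psi> (\<lambda>x. c * f x + g x) = (\<lambda>y. c * \<psi> f y + \<psi> g y)" for c f g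
    unfolding \<psi>_def by (intro ext) auto
  show ?thesis unfolding lin_iso_def
    by (intro exI[of _ \<psi>] conjI ballI allI) (use inj img lin in \<open>auto simp: bij_betw_def\<close>)
qed

end


definition trW :: "('a \<Rightarrow> 'k::field mat) \<Rightarrow> ('a \<Rightarrow> 'k mat)" where
  "trW W = (\<lambda>a. transpose_mat (W a))"

lemma trW_trW[simp]: "trW (trW W) = W" unfolding trW_def by simp

lemma trW_Rep: "W \<in> Rep A tA hA \<beta> \<Longrightarrow> trW W \<in> Rep A hA tA \<beta>"
proof (rule Rep_I)
  fix a assume "W \<in> Rep A tA hA \<beta>" "a \<in> A"
  then show "trW W a \<in> carrier_mat (\<beta> (tA a)) (\<beta> (hA a))" unfolding Rep_def trW_def by auto
next
  fix a assume "W \<in> Rep A tA hA \<beta>" "a \<notin> A"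
  then have "W a = 0\<^sub>m 0 0" unfolding Rep_def by auto
  then show "trW W a = 0\<^sub>m 0 0" unfolding trW_def by (intro eq_matI) auto
qed

lemma trW_Rep_iff: "trW W \<in> Rep A hA tA \<beta> \<longleftrightarrow> W \<in> Rep A tA hA \<beta>"
  using trW_Rep[of W A tA hA \<beta>] trW_Rep[of "trW W" A hA tA \<beta>] by auto

definition gstar :: "'v set \<Rightarrow> ('v \<Rightarrow> 'k::field mat) \<Rightarrow> 'v \<Rightarrow> 'k mat" where
  "gstar V g = (\<lambda>x. if x \<in> V then transpose_mat (mat_inv (g x)) else 1\<^sub>m 0)"

lemma GL_props: "g \<in> GL V \<beta> \<Longrightarrow> x \<in> V \<Longrightarrow> g x \<in> carrier_mat (\<beta> x) (\<beta> x) \<and> det (g x) \<noteq> 0"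
  unfolding GL_def by auto

lemma gstar_facts:
  fixes g :: "'v \<Rightarrow> 'k::field mat"
  assumes g: "g \<in> GL V \<beta>" and x: "x \<in> V"
  shows "gstar V g x \<in> carrier_mat (\<beta> x) (\<beta> x)" "mat_inv (gstar V g x) = transpose_mat (g x)"
    "det (gstar V g x) = inverse (det (g x))"
proof -
  have G: "g x \<in> carrier_mat (\<beta> x) (\<beta> x)" "det (g x) \<noteq> 0" using GL_props[OF g x] by auto
  note I = mat_inv_props[OF G]
  show C: "gstar V g x \<in> carrier_mat (\<beta> x) (\<beta> x)" using I x unfolding gstar_def by auto
  have Ic: "mat_inv (g x) \<in> carrier_mat (\<beta> x) (\<beta> x)" and gi: "g x * mat_inv (g x) = 1\<^sub>m (\<beta> x)"
    and ig: "mat_inv (g x) * g x = 1\<^sub>m (\<beta> x)" using I by auto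
  have "transpose_mat (mat_inv (g x)) * transpose_mat (g x) = transpose_mat (g x * mat_inv (g x))"
    using transpose_mult[OF G(1) Ic] by simp
  also have "\<dots> = 1\<^sub>m (\<beta> x)" by (simp only: gi transpose_one)
  finally have 1: "transpose_mat (mat_inv (g x)) * transpose_mat (g x) = 1\<^sub>m (\<beta> x)" .
  have "transpose_mat (g x) * transpose_mat (mat_inv (g x)) = transpose_mat (mat_inv (g x) * g x)"
    using transpose_mult[OF Ic G(1)] by simp
  also have "\<dots> = 1\<^sub>m (\<beta> x)" by (simp only: ig transpose_one)
  finally have 2: "transpose_mat (g x) * transpose_mat (mat_inv (g x)) = 1\<^sub>m (\<beta> x)" .
  show "mat_inv (gstar V g x) = transpose_mat (g x)"
    unfolding gstar_def using x by (simp, intro mat_inv_unique[of _ "\<beta> x"]) (use I G 1 2 in auto)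
  have "det (g x) * det (mat_inv (g x)) = 1" using det_mult[OF G(1), of "mat_inv (g x)"] I by simp
  hence "det (mat_inv (g x)) = inverse (det (g x))" using G(2) by (simp add: field_simps)
  then show "det (gstar V g x) = inverse (det (g x))"
    unfolding gstar_def using x det_transpose[of "mat_inv (g x)" "\<beta> x"] I by simp
qed

lemma gstar_GL: assumes g: "g \<in> GL V \<beta>" shows "gstar V g \<in> GL V \<beta>"
  unfolding GL_def
proof (intro CollectI conjI ballI allI impI)
  fix x assume x: "x \<in> V"
  show "gstar V g x \<in> carrier_mat (\<beta> x) (\<beta> x)" using gstar_facts[OF g x] by simp
  show "det (gstar V g x) \<noteq> 0" using gstar_facts[OF g x] GL_props[OF g x] by simp
next
  fix x assume "x \<notin> V" then show "gstar V g x = 1\<^sub>m 0" unfolding gstar_def by simp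
qed

lemma weight_gstar:
  fixes g :: "'v \<Rightarrow> 'k::field mat"
  assumes g: "g \<in> GL V \<beta>"
  shows "weight_char V \<sigma> (gstar V g) = weight_char V (-\<sigma>) g"
  unfolding weight_char_def
  by (rule prod.cong) (auto simp: gstar_facts[OF g] power_int_inverse power_int_minus)

lemma trW_act:
  fixes W :: "'a \<Rightarrow> 'k::field mat"
  assumes Q: "quiver V A tA hA" and g: "g \<in> GL V \<beta>" and W: "W \<in> Rep A hA tA \<beta>"
  shows "trW (gl_act A hA tA g W) = gl_act A tA hA (gstar V g) (trW W)"
proof (rule ext)
  fix a
  show "trW (gl_act A hA tA g W) a = gl_act A tA hA (gstar V g) (trW W) a"
  proof (cases "a \<in> A")
    case False then show ?thesis unfolding trW_def gl_act_def by simp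
  next
    case a: True
    have t: "tA a \<in> V" and h: "hA a \<in> V" using Q a unfolding quiver_def by auto
    have Gt: "g (tA a) \<in> carrier_mat (\<beta> (tA a)) (\<beta> (tA a))" "det (g (tA a)) \<noteq> 0" using GL_props[OF g t] by auto
    have Gh: "g (hA a) \<in> carrier_mat (\<beta> (hA a)) (\<beta> (hA a))" "det (g (hA a)) \<noteq> 0" using GL_props[OF g h] by auto
    have Ih: "mat_inv (g (hA a)) \<in> carrier_mat (\<beta> (hA a)) (\<beta> (hA a))" using mat_inv_props[OF Gh] by auto
    have Wa: "W a \<in> carrier_mat (\<beta> (tA a)) (\<beta> (hA a))" using W a unfolding Rep_def by auto
    have GW: "g (tA a) * W a \<in> carrier_mat (\<beta> (tA a)) (\<beta> (hA a))" using Gt Wa by auto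
    have "transpose_mat (g (tA a) * W a * mat_inv (g (hA a)))
        = transpose_mat (mat_inv (g (hA a))) * transpose_mat (g (tA a) * W a)"
      using transpose_mult[OF GW Ih] .
    also have "transpose_mat (g (tA a) * W a) = transpose_mat (W a) * transpose_mat (g (tA a))"
      using transpose_mult[OF Gt(1) Wa] .
    also have "transpose_mat (mat_inv (g (hA a))) * (transpose_mat (W a) * transpose_mat (g (tA a)))
        = transpose_mat (mat_inv (g (hA a))) * transpose_mat (W a) * transpose_mat (g (tA a))"
    proof -
      have c1: "transpose_mat (mat_inv (g (hA a))) \<in> carrier_mat (\<beta> (hA a)) (\<beta> (hA a))" using Ih by simp
      have c2: "transpose_mat (W a) \<in> carrier_mat (\<beta> (hA a)) (\<beta> (tA a))" using Wa by simp
      have c3: "transpose_mat (g (tA a)) \<in> carrier_mat (\<beta> (tA a)) (\<beta> (tA a))" using Gt by simp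
      show ?thesis using assoc_mult_mat[OF c1 c2 c3] by simp
    qed
    finally have L: "transpose_mat (g (tA a) * W a * mat_inv (g (hA a)))
        = transpose_mat (mat_inv (g (hA a))) * transpose_mat (W a) * transpose_mat (g (tA a))" .
    have lhs: "trW (gl_act A hA tA g W) a = transpose_mat (g (tA a) * W a * mat_inv (g (hA a)))"
      unfolding trW_def gl_act_def using a by simp
    have g1: "gstar V g (hA a) = transpose_mat (mat_inv (g (hA a)))" unfolding gstar_def using h by simp
    have g2: "mat_inv (gstar V g (tA a)) = transpose_mat (g (tA a))" using gstar_facts(2)[OF g t] .
    have rhs: "gl_act A tA hA (gstar V g) (trW W) a
        = gstar V g (hA a) * transpose_mat (W a) * mat_inv (gstar V g (tA a))"
      unfolding trW_def gl_act_def using a by simp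
    show ?thesis unfolding lhs rhs g1 g2 L ..
  qed
qed

lemma SI_dual:
  fixes f :: "('a \<Rightarrow> 'k::field mat) \<Rightarrow> 'k"
  assumes Q: "quiver V A tA hA" and f: "f \<in> SI V A tA hA \<beta> \<sigma>"
  shows "(\<lambda>W :: 'a \<Rightarrow> 'k mat. f (trW W)) \<in> SI V A hA tA \<beta> (-\<sigma>)"
proof -
  from f obtain p where p: "p \<in> poly_funs (rep_coords A tA hA \<beta>)" and fp: "\<forall>W\<in>Rep A tA hA \<beta>. f W = p W"
    unfolding SI_def by auto
  have "\<exists>q \<in> poly_funs (rep_coords A hA tA \<beta>). \<forall>W\<in>Rep A hA tA \<beta>. p (trW W) = q W"
  proof (rule poly_funs_subst[OF p])
    fix c :: "('a \<Rightarrow> 'k mat) \<Rightarrow> 'k" assume "c \<in> rep_coords A tA hA \<beta>"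
    then obtain a i j where c: "c = (\<lambda>W. W a $$ (i, j))" and a: "a \<in> A"
      and i: "i < \<beta> (hA a)" and j: "j < \<beta> (tA a)" unfolding rep_coords_def by auto
    have cc: "(\<lambda>W::'a \<Rightarrow> 'k mat. W a $$ (j, i)) \<in> rep_coords A hA tA \<beta>"
      unfolding rep_coords_def using a i j by auto
    have "\<forall>W\<in>Rep A hA tA \<beta>. c (trW W) = W a $$ (j, i)"
    proof
      fix W :: "'a \<Rightarrow> 'k mat" assume "W \<in> Rep A hA tA \<beta>"
      then have "W a \<in> carrier_mat (\<beta> (tA a)) (\<beta> (hA a))" using a unfolding Rep_def by auto
      then show "c (trW W) = W a $$ (j, i)" unfolding c trW_def using i j by auto
    qed
    then show "\<exists>q\<in>poly_funs (rep_coords A hA tA \<beta>). \<forall>W\<in>Rep A hA tA \<beta>. c (trW W) = q W"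
      using cc by (intro bexI[of _ "\<lambda>W. W a $$ (j, i)"] poly_funs.pf_coord) auto
  qed
  then obtain q where q: "q \<in> poly_funs (rep_coords A hA tA \<beta>)" and pq: "\<forall>W\<in>Rep A hA tA \<beta>. p (trW W) = q W"
    by blast
  have P1: "\<exists>q \<in> poly_funs (rep_coords A hA tA \<beta>). \<forall>W\<in>(Rep A hA tA \<beta> :: ('a \<Rightarrow> 'k mat) set). f (trW W) = q W"
  proof (intro bexI[of _ q] ballI)
    fix W :: "'a \<Rightarrow> 'k mat" assume W: "W \<in> Rep A hA tA \<beta>"
    then have "trW W \<in> Rep A tA hA \<beta>" using trW_Rep by fastforce
    then show "f (trW W) = q W" using fp pq W by simp
  qed (rule q)
  have P2: "\<forall>W :: 'a \<Rightarrow> 'k mat. W \<notin> Rep A hA tA \<beta> \<longrightarrow> f (trW W) = 0"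
  proof (intro allI impI)
    fix W :: "'a \<Rightarrow> 'k mat" assume "W \<notin> Rep A hA tA \<beta>"
    then have "trW W \<notin> Rep A tA hA \<beta>" using trW_Rep[of "trW W" A tA hA \<beta>] by auto
    then show "f (trW W) = 0" using f unfolding SI_def by blast
  qed
  have P3: "f (trW (gl_act A hA tA g W)) = inverse (weight_char V (-\<sigma>) g) * f (trW W)"
    if g: "g \<in> GL V \<beta>" and W: "W \<in> Rep A hA tA \<beta>" for g and W :: "'a \<Rightarrow> 'k mat"
  proof -
    have TW: "trW W \<in> Rep A tA hA \<beta>" using trW_Rep[OF W] by simp
    have "f (trW (gl_act A hA tA g W)) = f (gl_act A tA hA (gstar V g) (trW W))"
      using trW_act[OF Q g W] by simp
    also have "\<dots> = inverse (weight_char V \<sigma> (gstar V g)) * f (trW W)"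
      using f gstar_GL[OF g] TW unfolding SI_def by blast
    finally show ?thesis using weight_gstar[OF g] by simp
  qed
  show ?thesis unfolding SI_def using P1 P2 P3 by blast
qed

lemma quiver_op: "quiver V A tA hA \<Longrightarrow> quiver V A hA tA" unfolding quiver_def by auto

lemma lin_iso_dual:
  assumes Q: "quiver V A tA hA"
  shows "lin_iso (SI V A tA hA \<beta> \<sigma> :: (('a \<Rightarrow> 'k::field mat) \<Rightarrow> 'k) set) (SI V A hA tA \<beta> (-\<sigma>))"
proof -
  let ?S = "SI V A tA hA \<beta> \<sigma> :: (('a \<Rightarrow> 'k mat) \<Rightarrow> 'k) set"
  let ?S' = "SI V A hA tA \<beta> (-\<sigma>) :: (('a \<Rightarrow> 'k mat) \<Rightarrow> 'k) set"
  define \<chi> where "\<chi> f = (\<lambda>W :: 'a \<Rightarrow> 'k mat. f (trW W))" for f :: "('a \<Rightarrow> 'k mat) \<Rightarrow> 'k"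
  have chiS: "\<chi> f \<in> ?S'" if "f \<in> ?S" for f using SI_dual[OF Q that] unfolding \<chi>_def .
  have mm: "- (- \<sigma>) = \<sigma>" by (simp add: fun_Compl_def)
  have chiS': "\<chi> F \<in> ?S" if "F \<in> ?S'" for F using SI_dual[OF quiver_op[OF Q] that] unfolding \<chi>_def mm .
  have chichi: "\<chi> (\<chi> f) = f" for f unfolding \<chi>_def by simp
  have inj: "inj_on \<chi> ?S" by (metis chichi inj_onI)
  have img: "\<chi> ` ?S = ?S'"
  proof
    show "\<chi> ` ?S \<subseteq> ?S'" using chiS by auto
    show "?S' \<subseteq> \<chi> ` ?S"
    proof
      fix F assume F: "F \<in> ?S'"
      then show "F \<in> \<chi> ` ?S" using chiS'[OF F] chichi[of F] by (metis image_eqI)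
    qed
  qed
  show ?thesis unfolding lin_iso_def
    by (intro exI[of _ \<chi>] conjI ballI allI) (use inj img in \<open>auto simp: bij_betw_def \<chi>_def\<close>)
qed

lemma lin_iso_trans:
  assumes "lin_iso S T" "lin_iso T U"
  shows "lin_iso S U"
proof -
  from assms(1) obtain \<phi>1 where b1: "bij_betw \<phi>1 S T"
    and l1: "\<forall>f\<in>S. \<forall>g\<in>S. \<forall>c. \<phi>1 (\<lambda>x. c * f x + g x) = (\<lambda>y. c * \<phi>1 f y + \<phi>1 g y)"
    unfolding lin_iso_def by blast
  from assms(2) obtain \<phi>2 where b2: "bij_betw \<phi>2 T U"
    and l2: "\<forall>f\<in>T. \<forall>g\<in>T. \<forall>c. \<phi>2 (\<lambda>x. c * f x + g x) = (\<lambda>y. c * \<phi>2 f y + \<phi>2 g y)"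
    unfolding lin_iso_def by blast
  have "bij_betw (\<phi>2 \<circ> \<phi>1) S U" using bij_betw_trans[OF b1 b2] .
  moreover have "\<forall>f\<in>S. \<forall>g\<in>S. \<forall>c. (\<phi>2 \<circ> \<phi>1) (\<lambda>x. c * f x + g x) = (\<lambda>y. c * (\<phi>2 \<circ> \<phi>1) f y + (\<phi>2 \<circ> \<phi>1) g y)"
  proof (intro ballI allI)
    fix f g c assume f: "f \<in> S" and g: "g \<in> S"
    have "\<phi>1 f \<in> T" "\<phi>1 g \<in> T" using b1 f g unfolding bij_betw_def by auto
    then show "(\<phi>2 \<circ> \<phi>1) (\<lambda>x. c * f x + g x) = (\<lambda>y. c * (\<phi>2 \<circ> \<phi>1) f y + (\<phi>2 \<circ> \<phi>1) g y)"
      using l1 l2 f g by simp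
  qed
  ultimately show ?thesis unfolding lin_iso_def by blast
qed

lemma acyc_op: "no_oriented_cycles A tA hA \<Longrightarrow> no_oriented_cycles A hA tA"
proof -
  assume ac: "no_oriented_cycles A tA hA"
  have eq: "{(hA a, tA a) | a. a \<in> A} = {(tA a, hA a) | a. a \<in> A}\<inverse>" by auto
  show ?thesis unfolding no_oriented_cycles_def eq trancl_converse
    using ac unfolding no_oriented_cycles_def by auto
qed



theorem lemma4p6:
  fixes V :: "'v set" and A :: "'a set" and tA hA :: "'a \<Rightarrow> 'v"
    and \<beta> :: "'v \<Rightarrow> nat" and \<sigma> :: "'v \<Rightarrow> int" and v0 :: 'v and b :: 'a
  assumes k: "alg_closed_char0 TYPE('k::field_char_0)"
    and Q: "quiver V A tA hA"
    and acyc: "no_oriented_cycles A tA hA"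
    and v0: "v0 \<in> V" and b: "b \<in> A"
    and sigma0: "\<sigma> v0 = 0"
  shows
    "(tA b = v0 \<and> {a \<in> A. tA a = v0} = {b} \<and> \<beta> v0 \<ge> \<beta> (hA b) \<longrightarrow>
        lin_iso (SI V A tA hA \<beta> \<sigma> :: (('a \<Rightarrow> 'k mat) \<Rightarrow> 'k) set)
                (SI (V - {v0}) (A - {b}) tA (\<lambda>a. if hA a = v0 then hA b else hA a) \<beta> \<sigma>
                   :: (('a \<Rightarrow> 'k mat) \<Rightarrow> 'k) set))
   \<and> (hA b = v0 \<and> {a \<in> A. hA a = v0} = {b} \<and> \<beta> v0 \<ge> \<beta> (tA b) \<longrightarrow>
        lin_iso (SI V A tA hA \<beta> \<sigma> :: (('a \<Rightarrow> 'k mat) \<Rightarrow> 'k) set)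
                (SI (V - {v0}) (A - {b}) (\<lambda>a. if tA a = v0 then tA b else tA a) hA \<beta> \<sigma>
                   :: (('a \<Rightarrow> 'k mat) \<Rightarrow> 'k) set))"
proof (intro conjI impI)
  assume H: "tA b = v0 \<and> {a \<in> A. tA a = v0} = {b} \<and> \<beta> v0 \<ge> \<beta> (hA b)"
  interpret C: case1 V A tA hA \<beta> \<sigma> v0 b
    using Q acyc v0 b sigma0 H by unfold_locales auto
  show "lin_iso (SI V A tA hA \<beta> \<sigma> :: (('a \<Rightarrow> 'k mat) \<Rightarrow> 'k) set)
                (SI (V - {v0}) (A - {b}) tA (\<lambda>a. if hA a = v0 then hA b else hA a) \<beta> \<sigma>)"
    by (rule C.iso1)
next
  assume H: "hA b = v0 \<and> {a \<in> A. hA a = v0} = {b} \<and> \<beta> v0 \<ge> \<beta> (tA b)"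
  interpret C: case1 V A hA tA \<beta> "-\<sigma>" v0 b
    using quiver_op[OF Q] acyc_op[OF acyc] v0 b sigma0 H by unfold_locales auto
  have d1: "lin_iso (SI V A tA hA \<beta> \<sigma> :: (('a \<Rightarrow> 'k mat) \<Rightarrow> 'k) set) (SI V A hA tA \<beta> (-\<sigma>))"
    by (rule lin_iso_dual[OF Q])
  have i1: "lin_iso (SI V A hA tA \<beta> (-\<sigma>) :: (('a \<Rightarrow> 'k mat) \<Rightarrow> 'k) set)
      (SI (V - {v0}) (A - {b}) hA (\<lambda>a. if tA a = v0 then tA b else tA a) \<beta> (-\<sigma>))"
    by (rule C.iso1)
  have d2: "lin_iso (SI (V - {v0}) (A - {b}) hA (\<lambda>a. if tA a = v0 then tA b else tA a) \<beta> (-\<sigma>) :: (('a \<Rightarrow> 'k mat) \<Rightarrow> 'k) set)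
      (SI (V - {v0}) (A - {b}) (\<lambda>a. if tA a = v0 then tA b else tA a) hA \<beta> (-(-\<sigma>)))"
    by (rule lin_iso_dual[OF C.Q1])
  have mm: "- (- \<sigma>) = \<sigma>" by (simp add: fun_Compl_def)
  show "lin_iso (SI V A tA hA \<beta> \<sigma> :: (('a \<Rightarrow> 'k mat) \<Rightarrow> 'k) set)
                (SI (V - {v0}) (A - {b}) (\<lambda>a. if tA a = v0 then tA b else tA a) hA \<beta> \<sigma>)"
    using lin_iso_trans[OF lin_iso_trans[OF d1 i1] d2] unfolding mm .
qed


end
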